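(* Let $[a,b]$ be a bounded closed interval and let $A:L^2(a,b)\to L^2(a,b)$ be the integral operator $(Af)(x)=\int_a^b K(x,y)f(y)\,dy$ with a real, symmetric ($K(x,y)=K(y,x)$), square-integrable kernel $K$. Assume $A$ is injective, let $\{\psi_k\}_{k\ge1}$ be an orthonormal basis of $L^2(a,b)$ of eigenfunctions of $A$ with eigenvalues $\lambda_1>\lambda_2>\lambda_3>\cdots$, $\lambda_k\to 0$. Let $\xi$ and $\zeta$ be Gaussian weak random variables in $L^2(a,b)$ with zero means, uncorrelated with each other ($R_{\xi\zeta}=0$), with covariance operators $R_{\xi\xi}$ and $R_{\zeta\zeta}=\epsilon^2 N$, where $\epsilon>0$ and $N$ is a given positive operator such that $R_{\zeta\zeta}^{-1}$ exists. Put $\eta=A\xi+\zeta$, and for each $k$ let $\xi_k=(\xi,\psi_k)$, $\zeta_k=(\zeta,\psi_k)$, $\eta_k=(\eta,\psi_k)=\lambda_k\xi_k+\zeta_k$, $\rho_k^2=(R_{\xi\xi}\psi_k,\psi_k)$, $\nu_k^2=(N\psi_k,\psi_k)>0$ (no assumption is made that the $\xi_k$, or the $\zeta_k$, are mutually uncorrelated). Define $$\mathcal I=\{k:\lambda_k\rho_k\ge \epsilon\nu_k\},\qquad \mathcal N=\{k:\lambda_k\rho_k<\epsilon\nu_k\},$$ and the operator $\widehat B$ by $\widehat B g=\sum_{k\in\mathcal I}\frac{(g,\psi_k)}{\lambda_k}\psi_k$. Then: (i) if $\lim_{k\to\infty}\lambda_k\rho_k/\nu_k=0$, the set $\mathcal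 I$ is finite for every fixed $\epsilon>0$; (ii) if, in addition to the limit in (i), $R_{\xi\xi}$ is of trace class, then $$\mathrm{E}\left\{\|\xi-\widehat B\eta\|^2\right\}=\sum_{k\in\mathcal N}\rho_k^2+\sum_{k\in\mathcal I}\frac{\epsilon^2\nu_k^2}{\lambda_k^2}<\infty .$$
   Context: A (Gaussian) weak random variable in the Hilbert space $L^2(a,b)$ is a linear map $v\mapsto(\xi,v)$ assigning to each $v\in L^2(a,b)$ a real (jointly Gaussian) random variable; it is determined by its mean element and its covariance operator $R_{\xi\xi}$, defined by $(R_{\xi\xi}u,v)=\mathrm{E}\{(\xi,u)(\xi,v)\}$ (zero mean case); $R_{\xi\zeta}$ is defined analogously with $\mathrm{E}\{(\xi,u)(\zeta,v)\}$. $(\cdot,\cdot)$ and $\|\cdot\|$ are the inner product and norm of $L^2(a,b)$, and $\mathrm{E}$ denotes expectation. *)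

theory Defs
  imports "HOL-Probability.Probability"
begin

text \<open>Elements of L2(a,b) are represented by real functions on the real line, considered
  on the interval from a to b; equalities in L2 are almost-everywhere equalities.\<close>

definition L2 :: "real \<Rightarrow> real \<Rightarrow> (real \<Rightarrow> real) \<Rightarrow> bool" where
  "L2 a b f \<longleftrightarrow> f \<in> borel_measurable (lebesgue_on {a..b})
      \<and> integrable (lebesgue_on {a..b}) (\<lambda>x. (f x)\<^sup>2)"

definition ip :: "real \<Rightarrow> real \<Rightarrow> (real \<Rightarrow> real) \<Rightarrow> (real \<Rightarrow> real) \<Rightarrow> real" where
  "ip a b f g = (LINT x | lebesgue_on {a..b}. f x * g x)"

definition L2_eq :: "real \<Rightarrow> real \<Rightarrow> (real \<Rightarrow> real) \<Rightarrow> (real \<Rightarrow> real) \<Rightarrow> bool" where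
  "L2_eq a b f g \<longleftrightarrow> (AE x in lebesgue_on {a..b}. f x = g x)"

definition sq_int_kernel :: "real \<Rightarrow> real \<Rightarrow> (real \<Rightarrow> real \<Rightarrow> real) \<Rightarrow> bool" where
  "sq_int_kernel a b K \<longleftrightarrow>
     (\<lambda>(x,y). K x y) \<in> borel_measurable (lebesgue_on ({a..b} \<times> {a..b}))
     \<and> integrable (lebesgue_on ({a..b} \<times> {a..b})) (\<lambda>(x,y). (K x y)\<^sup>2)"

definition intop :: "real \<Rightarrow> real \<Rightarrow> (real \<Rightarrow> real \<Rightarrow> real) \<Rightarrow> (real \<Rightarrow> real) \<Rightarrow> real \<Rightarrow> real" where
  "intop a b K f = (\<lambda>x. LINT y | lebesgue_on {a..b}. K x y * f y)"

definition orthonormal_basis_L2 :: "real \<Rightarrow> real \<Rightarrow> (nat \<Rightarrow> real \<Rightarrow> real) \<Rightarrow> bool" where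
  "orthonormal_basis_L2 a b \<psi> \<longleftrightarrow>
     (\<forall>k. L2 a b (\<psi> k))
     \<and> (\<forall>j k. ip a b (\<psi> j) (\<psi> k) = (if j = k then 1 else 0))
     \<and> (\<forall>f. L2 a b f \<and> (\<forall>k. ip a b f (\<psi> k) = 0) \<longrightarrow> L2_eq a b f (\<lambda>_. 0))"

definition gaussian_rv :: "'w measure \<Rightarrow> ('w \<Rightarrow> real) \<Rightarrow> bool" where
  "gaussian_rv M Y \<longleftrightarrow>
     (\<exists>\<mu>. AE \<omega> in M. Y \<omega> = \<mu>)
     \<or> (\<exists>\<mu> \<sigma>. \<sigma> > 0 \<and> distributed M lborel Y (normal_density \<mu> \<sigma>))"

text \<open>A weak random variable on L2(a,b): a linear map u \<mapsto> (X,u) into random variables,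
  compatible with a.e. equality.\<close>
definition weak_rv :: "real \<Rightarrow> real \<Rightarrow> 'w measure \<Rightarrow> ((real \<Rightarrow> real) \<Rightarrow> 'w \<Rightarrow> real) \<Rightarrow> bool" where
  "weak_rv a b M X \<longleftrightarrow>
     (\<forall>u. L2 a b u \<longrightarrow> X u \<in> borel_measurable M)
     \<and> (\<forall>u v c. L2 a b u \<and> L2 a b v \<longrightarrow>
          (AE \<omega> in M. X (\<lambda>x. u x + c * v x) \<omega> = X u \<omega> + c * X v \<omega>))
     \<and> (\<forall>u v. L2 a b u \<and> L2 a b v \<and> L2_eq a b u v \<longrightarrow> (AE \<omega> in M. X u \<omega> = X v \<omega>))"

definition gaussian_weak_rv0 :: "real \<Rightarrow> real \<Rightarrow> 'w measure \<Rightarrow> ((real \<Rightarrow> real) \<Rightarrow> 'w \<Rightarrow> real) \<Rightarrow> bool" where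
  "gaussian_weak_rv0 a b M X \<longleftrightarrow> weak_rv a b M X
     \<and> (\<forall>u. L2 a b u \<longrightarrow> gaussian_rv M (X u) \<and> prob_space.expectation M (X u) = 0)"

text \<open>Covariance (R_XY u, v) = E{(X,u)(Y,v)} for zero-mean weak random variables.\<close>
definition cov :: "'w measure \<Rightarrow> ((real \<Rightarrow> real) \<Rightarrow> 'w \<Rightarrow> real) \<Rightarrow> ((real \<Rightarrow> real) \<Rightarrow> 'w \<Rightarrow> real)
                    \<Rightarrow> (real \<Rightarrow> real) \<Rightarrow> (real \<Rightarrow> real) \<Rightarrow> real" where
  "cov M X Y u v = prob_space.expectation M (\<lambda>\<omega>. X u \<omega> * Y v \<omega>)"

text \<open>E{||X||^2} for a zero-mean weak random variable: the trace of its covariance operator,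
  computed in the orthonormal basis \<psi>.\<close>
definition weak_mean_sq_norm :: "'w measure \<Rightarrow> (nat \<Rightarrow> real \<Rightarrow> real) \<Rightarrow> ((real \<Rightarrow> real) \<Rightarrow> 'w \<Rightarrow> real) \<Rightarrow> real" where
  "weak_mean_sq_norm M \<psi> X = (\<Sum>k. cov M X X (\<psi> k) (\<psi> k))"

end

theory Submission
  imports Defs
begin


lemma L2_zero: "L2 a b (\<lambda>_. 0)"
  unfolding L2_def by simp

lemma L2_scale: assumes "L2 a b f" shows "L2 a b (\<lambda>x. c * f x)"
proof -
  have "integrable (lebesgue_on {a..b}) (\<lambda>x. c\<^sup>2 * (f x)\<^sup>2)"
    using assms unfolding L2_def by (intro integrable_mult_right) auto
  moreover have "(\<lambda>x. c * f x) \<in> borel_measurable (lebesgue_on {a..b})"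
    using assms unfolding L2_def by (intro borel_measurable_times) auto
  ultimately show ?thesis using assms unfolding L2_def by (simp add: power_mult_distrib)
qed

lemma L2_AE:
  assumes f: "L2 a b f" and e: "L2_eq a b g f"
  shows "L2 a b g"
proof -
  have S: "{a..b} \<inter> space lebesgue \<in> sets lebesgue" by simp
  have fm: "f \<in> borel_measurable (lebesgue_on {a..b})" using f unfolding L2_def by simp
  hence "(\<lambda>x. indicator {a..b} x *\<^sub>R f x) \<in> borel_measurable lebesgue"
    using borel_measurable_restrict_space_iff[OF S, of f] by blast
  moreover have "AE x in lebesgue. indicator {a..b} x *\<^sub>R f x = indicator {a..b} x *\<^sub>R g x"
  proof -
    have "AE x in lebesgue. x \<in> {a..b} \<longrightarrow> g x = f x"
      using e unfolding L2_eq_def AE_restrict_space_iff[OF S] .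
    then show ?thesis by eventually_elim (auto simp: indicator_def)
  qed
  ultimately have "(\<lambda>x. indicator {a..b} x *\<^sub>R g x) \<in> borel_measurable lebesgue"
    by (rule borel_measurable_AE)
  hence gm: "g \<in> borel_measurable (lebesgue_on {a..b})"
    using borel_measurable_restrict_space_iff[OF S, of g] by blast
  have "AE x in lebesgue_on {a..b}. (f x)\<^sup>2 = (g x)\<^sup>2"
    using e unfolding L2_eq_def by eventually_elim simp
  hence "integrable (lebesgue_on {a..b}) (\<lambda>x. (f x)\<^sup>2) = integrable (lebesgue_on {a..b}) (\<lambda>x. (g x)\<^sup>2)"
    using fm gm by (intro integrable_cong_AE) auto
  then show ?thesis using f gm unfolding L2_def by simp
qed

lemma weak_zero:
  assumes "weak_rv a b M X"
  shows "AE \<omega> in M. X (\<lambda>_. 0) \<omega> = 0"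
proof -
  have "AE \<omega> in M. X (\<lambda>x. 0 + 1 * 0) \<omega> = X (\<lambda>_. 0) \<omega> + 1 * X (\<lambda>_. 0) \<omega>"
    using assms L2_zero[of a b] unfolding weak_rv_def by blast
  then show ?thesis by eventually_elim simp
qed

lemma weak_scale:
  assumes "weak_rv a b M X" "L2 a b v"
  shows "AE \<omega> in M. X (\<lambda>x. c * v x) \<omega> = c * X v \<omega>"
proof -
  have "AE \<omega> in M. X (\<lambda>x. 0 + c * v x) \<omega> = X (\<lambda>_. 0) \<omega> + c * X v \<omega>"
    using assms L2_zero[of a b] unfolding weak_rv_def by blast
  with weak_zero[OF assms(1)] show ?thesis by eventually_elim simp
qed

theorem proposition11:
  fixes a b \<epsilon> :: real
    and K :: "real \<Rightarrow> real \<Rightarrow> real"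
    and lam :: "nat \<Rightarrow> real"
    and \<psi> :: "nat \<Rightarrow> real \<Rightarrow> real"
    and M :: "'w measure"
    and \<xi> \<zeta> \<eta> err :: "(real \<Rightarrow> real) \<Rightarrow> 'w \<Rightarrow> real"
    and N :: "(real \<Rightarrow> real) \<Rightarrow> (real \<Rightarrow> real)"
    and \<rho> \<nu> :: "nat \<Rightarrow> real"
    and I NN :: "nat set"
  assumes ab: "a < b"
    and K_sqint: "sq_int_kernel a b K"
    and K_sym: "\<And>x y. K x y = K y x"
    and A_inj: "\<And>f. L2 a b f \<Longrightarrow> L2_eq a b (intop a b K f) (\<lambda>_. 0) \<Longrightarrow> L2_eq a b f (\<lambda>_. 0)"
    and onb: "orthonormal_basis_L2 a b \<psi>"
    and eigen: "\<And>k. L2_eq a b (intop a b K (\<psi> k)) (\<lambda>x. lam k * \<psi> k x)"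
    and lam_decr: "\<And>k. lam (Suc k) < lam k"
    and lam_lim: "lam \<longlonglongrightarrow> 0"
    and M_prob: "prob_space M"
    and \<xi>_gauss: "gaussian_weak_rv0 a b M \<xi>"
    and \<zeta>_gauss: "gaussian_weak_rv0 a b M \<zeta>"
    and uncorr: "\<And>u v. L2 a b u \<Longrightarrow> L2 a b v \<Longrightarrow> cov M \<xi> \<zeta> u v = 0"
    and eps_pos: "\<epsilon> > 0"
    and N_L2: "\<And>u. L2 a b u \<Longrightarrow> L2 a b (N u)"
    and N_pos: "\<And>u. L2 a b u \<Longrightarrow> \<not> L2_eq a b u (\<lambda>_. 0) \<Longrightarrow> ip a b (N u) u > 0"
    and R_\<zeta>\<zeta>: "\<And>u v. L2 a b u \<Longrightarrow> L2 a b v \<Longrightarrow> cov M \<zeta> \<zeta> u v = \<epsilon>\<^sup>2 * ip a b (N u) v"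
    and \<eta>_def: "\<eta> = (\<lambda>v \<omega>. \<xi> (intop a b K v) \<omega> + \<zeta> v \<omega>)"
    and \<rho>_def: "\<rho> = (\<lambda>k. sqrt (cov M \<xi> \<xi> (\<psi> k) (\<psi> k)))"
    and \<nu>_def: "\<nu> = (\<lambda>k. sqrt (ip a b (N (\<psi> k)) (\<psi> k)))"
    and \<nu>_pos: "\<And>k. ip a b (N (\<psi> k)) (\<psi> k) > 0"
    and I_def: "I = {k. lam k * \<rho> k \<ge> \<epsilon> * \<nu> k}"
    and NN_def: "NN = {k. lam k * \<rho> k < \<epsilon> * \<nu> k}"
    and err_def: "err = (\<lambda>v \<omega>. \<xi> v \<omega> - (\<Sum>k\<in>I. \<eta> (\<psi> k) \<omega> / lam k * ip a b (\<psi> k) v))"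
  shows "((\<lambda>k. lam k * \<rho> k / \<nu> k) \<longlonglongrightarrow> 0 \<longrightarrow>
            (\<forall>e>0. finite {k. lam k * \<rho> k \<ge> e * \<nu> k}))
       \<and> ((\<lambda>k. lam k * \<rho> k / \<nu> k) \<longlonglongrightarrow> 0 \<and> summable (\<lambda>k. cov M \<xi> \<xi> (\<psi> k) (\<psi> k)) \<longrightarrow>
            summable (\<lambda>k. cov M err err (\<psi> k) (\<psi> k))
            \<and> weak_mean_sq_norm M \<psi> err
                = (\<Sum>k. if k \<in> NN then (\<rho> k)\<^sup>2 else 0) + (\<Sum>k\<in>I. \<epsilon>\<^sup>2 * (\<nu> k)\<^sup>2 / (lam k)\<^sup>2))"
proof -
  have nu_pos: "\<nu> k > 0" for k using \<nu>_pos[of k] unfolding \<nu>_def by simp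
  have nu_sq: "(\<nu> k)\<^sup>2 = ip a b (N (\<psi> k)) (\<psi> k)" for k
    using \<nu>_pos[of k] unfolding \<nu>_def by simp
  have cxx_nn: "cov M \<xi> \<xi> (\<psi> k) (\<psi> k) \<ge> 0" for k
    unfolding cov_def by (intro integral_nonneg_AE) auto
  have rho_sq: "(\<rho> k)\<^sup>2 = cov M \<xi> \<xi> (\<psi> k) (\<psi> k)" for k
    using cxx_nn[of k] unfolding \<rho>_def by simp
  have lam_pos: "lam k > 0" for k
  proof -
    have "decseq lam" using lam_decr by (intro decseq_SucI) (simp add: less_imp_le)
    hence "0 \<le> lam (Suc k)" using lam_lim by (rule decseq_ge)
    with lam_decr[of k] show ?thesis by simp
  qed
  have part1: "(\<lambda>k. lam k * \<rho> k / \<nu> k) \<longlonglongrightarrow> 0 \<Longrightarrow> finite {k. lam k * \<rho> k \<ge> e * \<nu> k}"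
    if e: "e > 0" for e
  proof -
    assume lim: "(\<lambda>k. lam k * \<rho> k / \<nu> k) \<longlonglongrightarrow> 0"
    have "eventually (\<lambda>k. lam k * \<rho> k / \<nu> k < e) sequentially"
      using order_tendstoD(2)[OF lim e] .
    then obtain n where n: "\<And>k. k \<ge> n \<Longrightarrow> lam k * \<rho> k / \<nu> k < e"
      unfolding eventually_sequentially by blast
    have "{k. lam k * \<rho> k \<ge> e * \<nu> k} \<subseteq> {..<n}"
    proof
      fix k assume "k \<in> {k. lam k * \<rho> k \<ge> e * \<nu> k}"
      hence k: "lam k * \<rho> k \<ge> e * \<nu> k" by simp
      show "k \<in> {..<n}"
      proof (rule ccontr)
        assume "k \<notin> {..<n}"
        hence "lam k * \<rho> k / \<nu> k < e" using n by simp
        hence "lam k * \<rho> k < e * \<nu> k" using nu_pos[of k] by (simp add: divide_less_eq)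
        with k show False by simp
      qed
    qed
    then show ?thesis by (rule finite_subset) simp
  qed
  have part2: "summable (\<lambda>k. cov M err err (\<psi> k) (\<psi> k))
            \<and> weak_mean_sq_norm M \<psi> err
                = (\<Sum>k. if k \<in> NN then (\<rho> k)\<^sup>2 else 0) + (\<Sum>k\<in>I. \<epsilon>\<^sup>2 * (\<nu> k)\<^sup>2 / (lam k)\<^sup>2)"
    if lim: "(\<lambda>k. lam k * \<rho> k / \<nu> k) \<longlonglongrightarrow> 0" and summ: "summable (\<lambda>k. cov M \<xi> \<xi> (\<psi> k) (\<psi> k))"
  proof -
    have finI: "finite I" using part1[OF eps_pos lim] unfolding I_def .
    have NN_eq: "k \<in> NN \<longleftrightarrow> k \<notin> I" for k unfolding NN_def I_def by auto
    have wxi: "weak_rv a b M \<xi>" and wze: "weak_rv a b M \<zeta>"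
      using \<xi>_gauss \<zeta>_gauss unfolding gaussian_weak_rv0_def by auto
    have psiL2: "L2 a b (\<psi> k)" for k using onb unfolding orthonormal_basis_L2_def by auto
    have ipd: "ip a b (\<psi> j) (\<psi> k) = (if j = k then 1 else 0)" for j k
      using onb unfolding orthonormal_basis_L2_def by auto
    have AL2: "L2 a b (intop a b K (\<psi> k))" for k
      using L2_AE[OF L2_scale[OF psiL2] eigen] .
    have xiA: "AE \<omega> in M. \<xi> (intop a b K (\<psi> k)) \<omega> = lam k * \<xi> (\<psi> k) \<omega>" for k
    proof -
      have "AE \<omega> in M. \<xi> (intop a b K (\<psi> k)) \<omega> = \<xi> (\<lambda>x. lam k * \<psi> k x) \<omega>"
        using wxi AL2[of k] L2_scale[OF psiL2[of k], where c="lam k"] eigen[of k] unfolding weak_rv_def by blast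
      with weak_scale[OF wxi psiL2[of k], where c="lam k"] show ?thesis by eventually_elim simp
    qed
    have meas: "\<xi> u \<in> borel_measurable M" "\<zeta> u \<in> borel_measurable M" if "L2 a b u" for u
      using wxi wze that unfolding weak_rv_def by auto
    have err_pt: "err (\<psi> k) \<omega> = \<xi> (\<psi> k) \<omega> - (if k \<in> I then \<eta> (\<psi> k) \<omega> / lam k else 0)" for k \<omega>
    proof -
      have "(\<Sum>j\<in>I. \<eta> (\<psi> j) \<omega> / lam j * ip a b (\<psi> j) (\<psi> k))
          = (\<Sum>j\<in>I. if j = k then \<eta> (\<psi> j) \<omega> / lam j else 0)"
        by (intro sum.cong) (auto simp: ipd)
      also have "\<dots> = (if k \<in> I then \<eta> (\<psi> k) \<omega> / lam k else 0)"
        using finI by (simp add: sum.delta')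
      finally show ?thesis unfolding err_def by simp
    qed
    have err_meas: "err (\<psi> k) \<in> borel_measurable M" for k
    proof -
      have e: "err (\<psi> k) = (\<lambda>\<omega>. \<xi> (\<psi> k) \<omega> - (if k \<in> I then (\<xi> (intop a b K (\<psi> k)) \<omega> + \<zeta> (\<psi> k) \<omega>) / lam k else 0))"
        by (rule ext) (simp add: err_pt \<eta>_def)
      have m1: "\<xi> (\<psi> k) \<in> borel_measurable M" "\<xi> (intop a b K (\<psi> k)) \<in> borel_measurable M"
          "\<zeta> (\<psi> k) \<in> borel_measurable M"
        using meas psiL2 AL2 by auto
      show ?thesis unfolding e
        by (cases "k \<in> I") (simp_all add: m1 borel_measurable_diff borel_measurable_add borel_measurable_divide)
    qed
    have cI: "cov M err err (\<psi> k) (\<psi> k) = \<epsilon>\<^sup>2 * (\<nu> k)\<^sup>2 / (lam k)\<^sup>2" if k: "k \<in> I" for k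
    proof -
      have "AE \<omega> in M. err (\<psi> k) \<omega> * err (\<psi> k) \<omega> = \<zeta> (\<psi> k) \<omega> * \<zeta> (\<psi> k) \<omega> / (lam k)\<^sup>2"
        using xiA[of k]
      proof eventually_elim
        case (elim \<omega>)
        have "err (\<psi> k) \<omega> = \<xi> (\<psi> k) \<omega> - (lam k * \<xi> (\<psi> k) \<omega> + \<zeta> (\<psi> k) \<omega>) / lam k"
          using k elim by (simp add: err_pt \<eta>_def)
        also have "\<dots> = - \<zeta> (\<psi> k) \<omega> / lam k"
          using lam_pos[of k] by (simp add: add_divide_distrib)
        finally have "err (\<psi> k) \<omega> = - \<zeta> (\<psi> k) \<omega> / lam k" .
        then show ?case by (simp add: power2_eq_square)
      qed
      hence "cov M err err (\<psi> k) (\<psi> k) = integral\<^sup>L M (\<lambda>\<omega>. \<zeta> (\<psi> k) \<omega> * \<zeta> (\<psi> k) \<omega> / (lam k)\<^sup>2)"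
        unfolding cov_def using err_meas[of k] meas(2)[OF psiL2[of k]]
        by (intro integral_cong_AE) auto
      also have "\<dots> = cov M \<zeta> \<zeta> (\<psi> k) (\<psi> k) / (lam k)\<^sup>2"
        unfolding cov_def by simp
      also have "\<dots> = \<epsilon>\<^sup>2 * (\<nu> k)\<^sup>2 / (lam k)\<^sup>2"
        using R_\<zeta>\<zeta>[OF psiL2 psiL2, of k k] nu_sq[of k] by simp
      finally show ?thesis .
    qed
    have cN: "cov M err err (\<psi> k) (\<psi> k) = (\<rho> k)\<^sup>2" if k: "k \<notin> I" for k
    proof -
      have "(\<lambda>\<omega>. err (\<psi> k) \<omega> * err (\<psi> k) \<omega>) = (\<lambda>\<omega>. \<xi> (\<psi> k) \<omega> * \<xi> (\<psi> k) \<omega>)"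
        by (rule ext) (simp add: err_pt k)
      then show ?thesis unfolding cov_def rho_sq by simp
    qed
    define f1 where "f1 = (\<lambda>k. if k \<in> NN then (\<rho> k)\<^sup>2 else 0)"
    define f2 where "f2 = (\<lambda>k. if k \<in> I then \<epsilon>\<^sup>2 * (\<nu> k)\<^sup>2 / (lam k)\<^sup>2 else 0)"
    have c_eq: "(\<lambda>k. cov M err err (\<psi> k) (\<psi> k)) = (\<lambda>k. f1 k + f2 k)"
      using cI cN NN_eq unfolding f1_def f2_def by auto
    have s1: "summable f1"
      by (rule summable_comparison_test'[OF summ, of 0]) (auto simp: f1_def rho_sq cxx_nn)
    have s2: "summable f2" using finI by (intro summable_finite[of I]) (auto simp: f2_def)
    have sf2: "suminf f2 = (\<Sum>k\<in>I. \<epsilon>\<^sup>2 * (\<nu> k)\<^sup>2 / (lam k)\<^sup>2)"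
      using finI by (subst suminf_finite[of I]) (auto simp: f2_def)
    have eq1: "(\<Sum>k. if k \<in> NN then (\<rho> k)\<^sup>2 else 0) = suminf f1" by (simp add: f1_def)
    have eq2: "(\<Sum>k. f1 k + f2 k) = suminf f1 + suminf f2" by (rule suminf_add[OF s1 s2, symmetric])
    show ?thesis
      unfolding weak_mean_sq_norm_def c_eq eq1 eq2 sf2
      using summable_add[OF s1 s2] by simp
  qed
  show ?thesis
  proof (intro conjI impI allI)
    fix e :: real
    assume lim: "(\<lambda>k. lam k * \<rho> k / \<nu> k) \<longlonglongrightarrow> 0" and e: "e > 0"
    show "finite {k. lam k * \<rho> k \<ge> e * \<nu> k}" by (rule part1[OF e lim])
  next
    assume h: "(\<lambda>k. lam k * \<rho> k / \<nu> k) \<longlonglongrightarrow> 0 \<and> summable (\<lambda>k. cov M \<xi> \<xi> (\<psi> k) (\<psi> k))"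
    have p2: "summable (\<lambda>k. cov M err err (\<psi> k) (\<psi> k))
            \<and> weak_mean_sq_norm M \<psi> err
                = (\<Sum>k. if k \<in> NN then (\<rho> k)\<^sup>2 else 0) + (\<Sum>k\<in>I. \<epsilon>\<^sup>2 * (\<nu> k)\<^sup>2 / (lam k)\<^sup>2)"
      using h by (elim conjE) (rule part2)
    show "summable (\<lambda>k. cov M err err (\<psi> k) (\<psi> k))" using p2 by (rule conjunct1)
    show "weak_mean_sq_norm M \<psi> err
                = (\<Sum>k. if k \<in> NN then (\<rho> k)\<^sup>2 else 0) + (\<Sum>k\<in>I. \<epsilon>\<^sup>2 * (\<nu> k)\<^sup>2 / (lam k)\<^sup>2)"
      using p2 by (rule conjunct2)
  qed
qed

end
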